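(* Let $c\ge 20000$, and suppose $n\ge c$ and $m\ge n+2c$. With $\pi$ uniformly random from $\Pi_{n,m,c}$, $\Pr[\pi\in\mathcal{E}_1]\ge\Pr[\pi\in\mathcal{E}_2]$.
   Context: Integers $m,n,c$; $N=m+n+2c$. $\Pi_{n,m,c}$ is the set of maps $\pi:[N]\to\{\mathrm{BO},\mathrm{BN},\mathrm{SO},\mathrm{SN}\}$ with exactly $m$ indices mapped to $\mathrm{BO}$, $c$ to $\mathrm{BN}$, $n$ to $\mathrm{SO}$ and $c$ to $\mathrm{SN}$; write $B_{\mathrm{Old}}^\pi,B_{\mathrm{New}}^\pi,S_{\mathrm{Old}}^\pi,S_{\mathrm{New}}^\pi$ for these preimages. Let $p=\lceil n/10\rceil$, $I_1=\{1,\dots,p\}$, $I_2=\{p+1,\dots,2p\}$, $J_1=\{N-p+1,\dots,N\}$, $J_2=\{N-2p+1,\dots,N-p\}$. $\mathcal{E}_1$ is the set of $\pi\in\Pi_{n,m,c}$ with $|I_1\cap B_{\mathrm{New}}^\pi|\ge2$, $|I_2\cap B_{\mathrm{Old}}^\pi|\ge1$, $|J_1\cap S_{\mathrm{New}}^\pi|\ge2$, $|J_2\cap S_{\mathrm{Old}}^\pi|\ge1$. $\mathcal{E}_2=\{\pi\in\Pi_{n,m,c}:\pi\notin\mathcal{E}_1,\ S_{\mathrm{New}}^\pi\subseteq\{1,\dots,2n+2c\}\}$. *)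

theory Defs
  imports "HOL-Probability.Probability"
begin

datatype role = BO | BN | SO | SN

definition NN :: "nat \<Rightarrow> nat \<Rightarrow> nat \<Rightarrow> nat" where
  "NN n m c = m + n + 2 * c"

definition PiSet :: "nat \<Rightarrow> nat \<Rightarrow> nat \<Rightarrow> (nat \<Rightarrow> role) set" where
  "PiSet n m c = {\<pi> \<in> {1..NN n m c} \<rightarrow>\<^sub>E UNIV.
      card {i \<in> {1..NN n m c}. \<pi> i = BO} = m \<and>
      card {i \<in> {1..NN n m c}. \<pi> i = BN} = c \<and>
      card {i \<in> {1..NN n m c}. \<pi> i = SO} = n \<and>
      card {i \<in> {1..NN n m c}. \<pi> i = SN} = c}"

definition pp :: "nat \<Rightarrow> nat" where
  "pp n = nat \<lceil>real n / 10\<rceil>"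

definition E1 :: "nat \<Rightarrow> nat \<Rightarrow> nat \<Rightarrow> (nat \<Rightarrow> role) set" where
  "E1 n m c = (let N = NN n m c; p = pp n in
     {\<pi> \<in> PiSet n m c.
        card ({1..p} \<inter> {i. \<pi> i = BN}) \<ge> 2 \<and>
        card ({p+1..2*p} \<inter> {i. \<pi> i = BO}) \<ge> 1 \<and>
        card ({N-p+1..N} \<inter> {i. \<pi> i = SN}) \<ge> 2 \<and>
        card ({N-2*p+1..N-p} \<inter> {i. \<pi> i = SO}) \<ge> 1})"

definition E2 :: "nat \<Rightarrow> nat \<Rightarrow> nat \<Rightarrow> (nat \<Rightarrow> role) set" where
  "E2 n m c = {\<pi> \<in> PiSet n m c. \<pi> \<notin> E1 n m c \<and>
      {i \<in> {1..NN n m c}. \<pi> i = SN} \<subseteq> {1..2*n+2*c}}"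

end

theory Submission
  imports Defs
begin

lemma finite_role: "finite (UNIV :: role set)"
proof -
  have "UNIV = {BO,BN,SO,SN}" using role.exhaust by auto
  then show ?thesis by (metis finite.emptyI finite_insert)
qed

lemma finite_PiSet: "finite (PiSet n m c)"
proof -
  have "PiSet n m c \<subseteq> {1..NN n m c} \<rightarrow>\<^sub>E (UNIV :: role set)" by (auto simp: PiSet_def)
  moreover have "finite ({1..NN n m c} \<rightarrow>\<^sub>E (UNIV :: role set))"
    using finite_role by (intro finite_PiE) auto
  ultimately show ?thesis by (rule finite_subset)
qed

lemma card_filter_sum: "finite Y \<Longrightarrow> card {y\<in>Y. P y} = (\<Sum>y\<in>Y. if P y then 1 else 0::nat)"
  by (simp add: sum.inter_filter[symmetric])

lemma sum_card_swap:
  assumes "finite X" "finite Y"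
  shows "(\<Sum>x\<in>X. card {y\<in>Y. R x y}) = (\<Sum>y\<in>Y. card {x\<in>X. R x y})"
proof -
  have "(\<Sum>x\<in>X. card {y\<in>Y. R x y}) = (\<Sum>x\<in>X. \<Sum>y\<in>Y. (if R x y then 1 else 0::nat))"
    using assms by (simp add: card_filter_sum)
  also have "\<dots> = (\<Sum>y\<in>Y. \<Sum>x\<in>X. (if R x y then 1 else 0::nat))" by (rule sum.swap)
  also have "\<dots> = (\<Sum>y\<in>Y. card {x\<in>X. R x y})"
    using assms by (simp add: card_filter_sum)
  finally show ?thesis .
qed

lemma card_ge2: assumes "finite S" "x \<in> S" "y \<in> S" "x \<noteq> y" shows "2 \<le> card S"
proof -
  have "{x,y} \<subseteq> S" using assms by auto
  then have "card {x,y} \<le> card S" using card_mono[OF assms(1)] by blast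
  then show ?thesis using assms(4) by simp
qed

lemma card_ge2_D: assumes "2 \<le> card S" obtains x y where "x \<in> S" "y \<in> S" "x \<noteq> y"
proof -
  have "finite S" using assms by (metis card.infinite not_numeral_le_zero)
  obtain x where x: "x \<in> S" using assms by fastforce
  have "card (S - {x}) \<ge> 1" using assms x \<open>finite S\<close> by (simp add: card_Diff_singleton)
  then have "S - {x} \<noteq> {}" by (metis card.empty not_one_le_zero)
  then obtain y where "y \<in> S - {x}" by blast
  then show ?thesis using that x by blast
qed

lemma card_ge3_D: assumes "3 \<le> card S" "finite S" shows "2 \<le> card (S - {z})"
  using assms by (auto simp: card_Diff_singleton_if)

definition sw :: "(nat \<Rightarrow> role) \<Rightarrow> nat \<Rightarrow> nat \<Rightarrow> nat \<Rightarrow> role" where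
  "sw \<pi> a b = (\<lambda>i. if i = a then \<pi> b else if i = b then \<pi> a else \<pi> i)"

definition tr :: "nat \<Rightarrow> nat \<Rightarrow> nat \<Rightarrow> nat" where
  "tr a b i = (if i = a then b else if i = b then a else i)"

lemma tr_tr: "tr a b (tr a b i) = i" by (simp add: tr_def)
lemma sw_sw: "sw (sw \<pi> a b) a b = \<pi>" by (auto simp: sw_def)
lemma sw_comm: "sw \<pi> a b = sw \<pi> b a" by (auto simp: sw_def)
lemma inj_tr: "inj (tr a b)" by (metis injI tr_tr)

lemma sw_eq_tr: "sw \<pi> a b i = \<pi> (tr a b i)" by (simp add: sw_def tr_def)

lemma tr_mem: assumes "a \<in> V \<longleftrightarrow> b \<in> V" shows "tr a b i \<in> V \<longleftrightarrow> i \<in> V"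
  using assms by (simp add: tr_def)

lemma sw_set: assumes "a \<in> V \<longleftrightarrow> b \<in> V"
  shows "{i\<in>V. sw \<pi> a b i = X} = tr a b ` {i\<in>V. \<pi> i = X}"
proof (intro equalityI subsetI)
  fix i assume "i \<in> {i\<in>V. sw \<pi> a b i = X}"
  then have "tr a b i \<in> {i\<in>V. \<pi> i = X}" using tr_mem[OF assms] by (simp add: sw_eq_tr)
  then show "i \<in> tr a b ` {i\<in>V. \<pi> i = X}" by (metis tr_tr image_eqI)
next
  fix i assume "i \<in> tr a b ` {i\<in>V. \<pi> i = X}"
  then obtain i' where "i = tr a b i'" "i' \<in> V" "\<pi> i' = X" by blast
  then show "i \<in> {i\<in>V. sw \<pi> a b i = X}" using tr_mem[OF assms] by (simp add: sw_eq_tr tr_tr)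
qed

lemma sw_card: assumes "a \<in> V \<longleftrightarrow> b \<in> V"
  shows "card {i\<in>V. sw \<pi> a b i = X} = card {i\<in>V. \<pi> i = X}"
  unfolding sw_set[OF assms] by (rule card_image) (rule inj_on_subset[OF inj_tr subset_UNIV])

lemma Int_Collect_eq: "V \<inter> {i. \<pi> i = X} = {i\<in>V. \<pi> i = X}" by blast

lemma PiSet_iff: "\<pi> \<in> PiSet n m c \<longleftrightarrow>
   (\<forall>i. i \<notin> {1..NN n m c} \<longrightarrow> \<pi> i = undefined) \<and>
      card {i \<in> {1..NN n m c}. \<pi> i = BO} = m \<and>
      card {i \<in> {1..NN n m c}. \<pi> i = BN} = c \<and>
      card {i \<in> {1..NN n m c}. \<pi> i = SO} = n \<and>
      card {i \<in> {1..NN n m c}. \<pi> i = SN} = c"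
  by (auto simp: PiSet_def PiE_def extensional_def)

lemma sw_PiSet: assumes "\<pi> \<in> PiSet n m c" "a \<in> {1..NN n m c}" "b \<in> {1..NN n m c}"
  shows "sw \<pi> a b \<in> PiSet n m c"
proof -
  have e: "a \<in> {1..NN n m c} \<longleftrightarrow> b \<in> {1..NN n m c}" using assms by auto
  have cX: "\<And>X. card {i \<in> {1..NN n m c}. sw \<pi> a b i = X} = card {i\<in>{1..NN n m c}. \<pi> i = X}"
    by (rule sw_card[OF e])
  show ?thesis unfolding PiSet_iff cX using assms(1)[unfolded PiSet_iff] assms(2,3)
    by (auto simp: sw_def)
qed

lemma sym_le:
  assumes "\<forall>\<pi>\<in>S. sw \<pi> k k' \<in> S" "\<forall>\<pi>\<in>S. P \<pi> k \<longrightarrow> P (sw \<pi> k k') k'" "finite S"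
  shows "card {\<pi>\<in>S. P \<pi> k} \<le> card {\<pi>\<in>S. P \<pi> k'}"
proof -
  have "inj_on (\<lambda>\<pi>. sw \<pi> k k') {\<pi>\<in>S. P \<pi> k}" by (intro inj_onI) (metis sw_sw)
  moreover have "(\<lambda>\<pi>. sw \<pi> k k') ` {\<pi>\<in>S. P \<pi> k} \<subseteq> {\<pi>\<in>S. P \<pi> k'}" using assms by auto
  moreover have "finite {\<pi>\<in>S. P \<pi> k'}" using assms(3) by simp
  ultimately show ?thesis by (rule card_inj_on_le)
qed

lemma sym_avg:
  assumes "finite S" "finite K" "k0 \<in> K"
   and cl: "\<And>k \<pi>. k \<in> K \<Longrightarrow> \<pi> \<in> S \<Longrightarrow> sw \<pi> k k0 \<in> S"
   and P1: "\<And>k \<pi>. k \<in> K \<Longrightarrow> \<pi> \<in> S \<Longrightarrow> P \<pi> k \<Longrightarrow> P (sw \<pi> k k0) k0"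
   and P2: "\<And>k \<pi>. k \<in> K \<Longrightarrow> \<pi> \<in> S \<Longrightarrow> P \<pi> k0 \<Longrightarrow> P (sw \<pi> k k0) k"
  shows "card K * card {\<pi>\<in>S. P \<pi> k0} = (\<Sum>\<pi>\<in>S. card {k\<in>K. P \<pi> k})"
proof -
  have eq: "card {\<pi>\<in>S. P \<pi> k} = card {\<pi>\<in>S. P \<pi> k0}" if "k \<in> K" for k
  proof (rule antisym)
    show "card {\<pi>\<in>S. P \<pi> k} \<le> card {\<pi>\<in>S. P \<pi> k0}"
      using that cl P1 assms(1) by (intro sym_le) auto
    show "card {\<pi>\<in>S. P \<pi> k0} \<le> card {\<pi>\<in>S. P \<pi> k}"
      using that cl P2 assms(1) by (intro sym_le) (auto simp: sw_comm[of _ k0 k])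
  qed
  have "(\<Sum>k\<in>K. card {\<pi>\<in>S. P \<pi> k}) = (\<Sum>k\<in>K. card {\<pi>\<in>S. P \<pi> k0})"
    using eq by (rule sum.cong[OF refl])
  also have "\<dots> = card K * card {\<pi>\<in>S. P \<pi> k0}" by simp
  finally have "card K * card {\<pi>\<in>S. P \<pi> k0} = (\<Sum>k\<in>K. card {\<pi>\<in>S. P \<pi> k})" by simp
  also have "\<dots> = (\<Sum>\<pi>\<in>S. card {k\<in>K. P \<pi> k})"
    using sum_card_swap[OF assms(2) assms(1), of "\<lambda>k \<pi>. P \<pi> k"] by simp
  finally show ?thesis .
qed

lemma hyper_ratio:
  assumes S: "S = PiSet n m c" and NN: "N = NN n m c"
   and R: "R \<subseteq> {1..N}"
   and k: "\<And>\<pi>. \<pi> \<in> S \<Longrightarrow> card {i\<in>{1..N}. \<pi> i = l} = k"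
  shows "card {\<pi>\<in>S. card {i\<in>R. \<pi> i = l} = j} * ((card R - j) * (k - j))
       \<le> card {\<pi>\<in>S. card {i\<in>R. \<pi> i = l} = Suc j} * (Suc j * N)"
proof -
  let ?X = "{\<pi>\<in>S. card {i\<in>R. \<pi> i = l} = j}"
  let ?Y = "{\<pi>\<in>S. card {i\<in>R. \<pi> i = l} = Suc j}"
  define Rel where "Rel \<pi> \<sigma> \<longleftrightarrow> (\<exists>a\<in>R. \<exists>b\<in>{1..N}-R. \<pi> a \<noteq> l \<and> \<pi> b = l \<and> \<sigma> = sw \<pi> a b)" for \<pi> \<sigma>
  have finS: "finite S" using finite_PiSet S by simp
  have finR: "finite R" using R finite_subset by blast
  have low: "(card R - j) * (k - j) \<le> card {\<sigma>\<in>?Y. Rel \<pi> \<sigma>}" if "\<pi> \<in> ?X" for \<pi>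
  proof -
    let ?A = "{a\<in>R. \<pi> a \<noteq> l}" and ?B = "{b\<in>{1..N}-R. \<pi> b = l}"
    have cA: "card ?A = card R - j"
    proof -
      have "?A = R - {i\<in>R. \<pi> i = l}" by auto
      then show ?thesis using that finR by (simp add: card_Diff_subset)
    qed
    have cB: "card ?B = k - j"
    proof -
      have "?B = {i\<in>{1..N}. \<pi> i = l} - {i\<in>R. \<pi> i = l}" using R by auto
      moreover have "{i\<in>R. \<pi> i = l} \<subseteq> {i\<in>{1..N}. \<pi> i = l}" using R by auto
      ultimately show ?thesis using that k[of \<pi>] finR by (simp add: card_Diff_subset)
    qed
    have inj: "inj_on (\<lambda>(a,b). sw \<pi> a b) (?A \<times> ?B)"
    proof (rule inj_onI)
      fix x y assume xy: "x \<in> ?A \<times> ?B" "y \<in> ?A \<times> ?B"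
        and e: "(\<lambda>(a,b). sw \<pi> a b) x = (\<lambda>(a,b). sw \<pi> a b) y"
      obtain a b where x: "x = (a,b)" by fastforce
      obtain a' b' where y: "y = (a',b')" by fastforce
      have h: "a \<in> R" "\<pi> a \<noteq> l" "b \<notin> R" "\<pi> b = l"
        "a' \<in> R" "\<pi> a' \<noteq> l" "b' \<notin> R" "\<pi> b' = l" using xy x y by auto
      have e': "sw \<pi> a b = sw \<pi> a' b'" using e x y by simp
      have "sw \<pi> a b a = l" using h by (simp add: sw_def)
      then have e1: "sw \<pi> a' b' a = l" using e' by simp
      have "sw \<pi> a b b = \<pi> a" using h by (auto simp: sw_def)
      then have e2: "sw \<pi> a' b' b = \<pi> a" using e' by simp
      have "a = a'" using e1 h unfolding sw_def by (cases "a = a'"; cases "a = b'") auto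
      moreover have "b = b'" using e2 h \<open>a = a'\<close> unfolding sw_def by (cases "b = b'"; cases "b = a'") auto
      ultimately show "x = y" using x y by simp
    qed
    have sub: "(\<lambda>(a,b). sw \<pi> a b) ` (?A \<times> ?B) \<subseteq> {\<sigma>\<in>?Y. Rel \<pi> \<sigma>}"
    proof
      fix x assume "x \<in> (\<lambda>(a,b). sw \<pi> a b) ` (?A \<times> ?B)"
      then obtain a b where x: "x = sw \<pi> a b" and
        h: "a \<in> R" "\<pi> a \<noteq> l" "b \<in> {1..N}" "b \<notin> R" "\<pi> b = l" by auto
      have "sw \<pi> a b \<in> S" using sw_PiSet that h R S NN by auto
      moreover have "{i\<in>R. sw \<pi> a b i = l} = insert a {i\<in>R. \<pi> i = l}" using h by (auto simp: sw_def)
      moreover have "a \<notin> {i\<in>R. \<pi> i = l}" using h by auto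
      ultimately have "sw \<pi> a b \<in> ?Y" using that finR by auto
      then show "x \<in> {\<sigma>\<in>?Y. Rel \<pi> \<sigma>}" using h x unfolding Rel_def by blast
    qed
    have "card (?A \<times> ?B) \<le> card {\<sigma>\<in>?Y. Rel \<pi> \<sigma>}"
      using card_inj_on_le[OF inj sub] finS by auto
    then show ?thesis using cA cB by (simp add: card_cartesian_product)
  qed
  have up: "card {\<pi>\<in>?X. Rel \<pi> \<sigma>} \<le> Suc j * N" if "\<sigma> \<in> ?Y" for \<sigma>
  proof -
    have "{\<pi>\<in>?X. Rel \<pi> \<sigma>} \<subseteq> (\<lambda>(a,b). sw \<sigma> a b) ` ({i\<in>R. \<sigma> i = l} \<times> ({1..N}-R))"
    proof
      fix \<pi> assume "\<pi> \<in> {\<pi>\<in>?X. Rel \<pi> \<sigma>}"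
      then obtain a b where h: "a\<in>R" "b\<in>{1..N}-R" "\<pi> a \<noteq> l" "\<pi> b = l" "\<sigma> = sw \<pi> a b"
        unfolding Rel_def by auto
      then have "\<pi> = sw \<sigma> a b" by (simp add: sw_sw)
      moreover have "\<sigma> a = l" using h by (auto simp: sw_def)
      ultimately show "\<pi> \<in> (\<lambda>(a,b). sw \<sigma> a b) ` ({i\<in>R. \<sigma> i = l} \<times> ({1..N}-R))"
        using h(1,2) by (intro image_eqI[where x="(a,b)"]) auto
    qed
    then have "card {\<pi>\<in>?X. Rel \<pi> \<sigma>} \<le> card ((\<lambda>(a,b). sw \<sigma> a b) ` ({i\<in>R. \<sigma> i = l} \<times> ({1..N}-R)))"
      using finR by (intro card_mono) auto
    also have "\<dots> \<le> card ({i\<in>R. \<sigma> i = l} \<times> ({1..N}-R))"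
      using finR by (intro card_image_le) auto
    also have "\<dots> = Suc j * card ({1..N}-R)" using that by (simp add: card_cartesian_product)
    also have "\<dots> \<le> Suc j * N"
    proof -
      have "card ({1..N}-R) \<le> card {1..N}" by (intro card_mono) auto
      then show ?thesis by (intro mult_le_mono2) simp
    qed
    finally show ?thesis .
  qed
  have "card ?X * ((card R - j) * (k - j)) \<le> (\<Sum>\<pi>\<in>?X. card {\<sigma>\<in>?Y. Rel \<pi> \<sigma>})"
    using low sum_bounded_below[of ?X "(card R - j) * (k - j)"] by (simp add: mult.commute)
  also have "\<dots> = (\<Sum>\<sigma>\<in>?Y. card {\<pi>\<in>?X. Rel \<pi> \<sigma>})"
    using finS by (intro sum_card_swap) auto
  also have "\<dots> \<le> card ?Y * (Suc j * N)"
    using up sum_bounded_above[of ?Y _ "Suc j * N"] by simp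
  finally show ?thesis .
qed

definition ins :: "(nat \<Rightarrow> role) \<Rightarrow> nat \<Rightarrow> nat \<Rightarrow> role" where
  "ins \<pi> j = (\<lambda>i. if i < j then \<pi> i else if i = j then BO else \<pi> (i - 1))"

definition del :: "(nat \<Rightarrow> role) \<Rightarrow> nat \<Rightarrow> nat \<Rightarrow> role" where
  "del \<sigma> j = (\<lambda>i. if i < j then \<sigma> i else \<sigma> (Suc i))"

lemma del_ins: "del (ins \<pi> j) j = \<pi>"
  by (rule ext) (simp add: del_def ins_def)

lemma ins_del: "\<sigma> j = BO \<Longrightarrow> ins (del \<sigma> j) j = \<sigma>"
  by (rule ext) (auto simp: del_def ins_def)

lemma ins_at: "ins \<pi> j j = BO" by (simp add: ins_def)

lemma card_insert_filter:
  assumes "finite S" "a \<notin> S"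
  shows "card {i\<in>insert a S. P i} = card {i\<in>S. P i} + (if P a then 1 else 0)"
proof -
  have "{i\<in>insert a S. P i} = (if P a then insert a {i\<in>S. P i} else {i\<in>S. P i})" by auto
  then show ?thesis using assms by auto
qed

lemma split_back:
  fixes a b :: nat and \<pi> :: "nat \<Rightarrow> role"
  assumes "1 \<le> a" "a \<le> b"
  shows "card {i\<in>{a..b}. \<pi> i = X} = card {i\<in>{a..b-1}. \<pi> i = X} + (if \<pi> b = X then 1 else 0)"
proof -
  have "{a..b} = insert b {a..b-1}" using assms by auto
  moreover have "b \<notin> {a..b-1}" using assms by auto
  ultimately show ?thesis using card_insert_filter[of "{a..b-1}" b "\<lambda>i. \<pi> i = X"] by simp
qed

lemma split_front:
  fixes a b :: nat and \<pi> :: "nat \<Rightarrow> role"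
  assumes "a \<le> b"
  shows "card {i\<in>{a..b}. \<pi> i = X} = (if \<pi> a = X then 1 else 0) + card {i\<in>{Suc a..b}. \<pi> i = X}"
proof -
  have "{a..b} = insert a {Suc a..b}" using assms by auto
  moreover have "a \<notin> {Suc a..b}" using assms by auto
  ultimately show ?thesis using card_insert_filter[of "{Suc a..b}" a "\<lambda>i. \<pi> i = X"] by simp
qed

lemma ins_card_before:
  assumes "b < j"
  shows "card {i\<in>{a..b}. ins \<pi> j i = X} = card {i\<in>{a..b}. \<pi> i = X}"
proof -
  have "{i\<in>{a..b}. ins \<pi> j i = X} = {i\<in>{a..b}. \<pi> i = X}" using assms by (auto simp: ins_def)
  then show ?thesis by simp
qed

lemma ins_card_mid:
  assumes "1 \<le> a" "a \<le> j" "j \<le> b"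
  shows "card {i\<in>{a..b}. ins \<pi> j i = X} = card {i\<in>{a..b-1}. \<pi> i = X} + (if X = BO then 1 else 0)"
  using assms(3)
proof (induct b rule: dec_induct)
  case base
  have "card {i\<in>{a..j}. ins \<pi> j i = X} = card {i\<in>{a..j-1}. ins \<pi> j i = X} + (if ins \<pi> j j = X then 1 else 0)"
    using assms by (intro split_back) auto
  also have "card {i\<in>{a..j-1}. ins \<pi> j i = X} = card {i\<in>{a..j-1}. \<pi> i = X}"
    using assms by (intro ins_card_before) auto
  finally show ?case by (auto simp: ins_at)
next
  case (step b)
  have 1: "card {i\<in>{a..Suc b}. ins \<pi> j i = X} = card {i\<in>{a..b}. ins \<pi> j i = X} + (if ins \<pi> j (Suc b) = X then 1 else 0)"
    using assms step by (subst split_back) auto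
  have 2: "ins \<pi> j (Suc b) = \<pi> b" using step by (simp add: ins_def)
  have 3: "card {i\<in>{a..b}. \<pi> i = X} = card {i\<in>{a..b-1}. \<pi> i = X} + (if \<pi> b = X then 1 else 0)"
    using assms step by (intro split_back) auto
  show ?case using 1 2 3 step(3) by simp
qed

lemma ins_card_after:
  assumes "j < a" "a \<le> b" "1 \<le> j"
  shows "card {i\<in>{a..b}. ins \<pi> j i = X} = card {i\<in>{a-1..b-1}. \<pi> i = X}"
  using assms(2)
proof (induct b rule: dec_induct)
  case base
  have "{i\<in>{a..a}. ins \<pi> j i = X} = (if \<pi> (a-1) = X then {a} else {})" using assms by (auto simp: ins_def)
  moreover have "{i\<in>{a-1..a-1}. \<pi> i = X} = (if \<pi> (a-1) = X then {a-1} else {})" by auto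
  ultimately show ?case by simp
next
  case (step b)
  have 1: "card {i\<in>{a..Suc b}. ins \<pi> j i = X} = card {i\<in>{a..b}. ins \<pi> j i = X} + (if ins \<pi> j (Suc b) = X then 1 else 0)"
    using assms step by (subst split_back) auto
  have 2: "ins \<pi> j (Suc b) = \<pi> b" using step assms by (simp add: ins_def)
  have 3: "card {i\<in>{a-1..b}. \<pi> i = X} = card {i\<in>{a-1..b-1}. \<pi> i = X} + (if \<pi> b = X then 1 else 0)"
    using assms step by (intro split_back) auto
  show ?case using 1 2 3 step(3) by simp
qed

lemma NN_Suc: "NN n (Suc m) c = Suc (NN n m c)" by (simp add: NN_def)

lemma ins_PiSet:
  assumes "\<pi> \<in> PiSet n m c" "1 \<le> j" "j \<le> Suc (NN n m c)"
  shows "ins \<pi> j \<in> PiSet n (Suc m) c"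
proof -
  let ?N = "NN n m c"
  have cnt: "card {i\<in>{1..Suc ?N}. ins \<pi> j i = X} = card {i\<in>{1..?N}. \<pi> i = X} + (if X = BO then 1 else 0)" for X
    using ins_card_mid[of 1 j "Suc ?N" \<pi> X] assms by simp
  have ext: "ins \<pi> j i = undefined" if "i \<notin> {1..Suc ?N}" for i
  proof (cases "i < j")
    case True
    then have "i \<notin> {1..?N}" using that assms by auto
    then show ?thesis using True assms(1) unfolding PiSet_iff ins_def by auto
  next
    case False
    then have "i \<noteq> j" "i - 1 \<notin> {1..?N}" using that assms by auto
    then show ?thesis using False assms(1) unfolding PiSet_iff ins_def by auto
  qed
  show ?thesis unfolding PiSet_iff NN_Suc cnt using assms(1) ext unfolding PiSet_iff NN_Suc
    by auto
qed

lemma del_PiSet: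
  assumes "\<sigma> \<in> PiSet n (Suc m) c" "1 \<le> j" "j \<le> Suc (NN n m c)" "\<sigma> j = BO"
  shows "del \<sigma> j \<in> PiSet n m c"
proof -
  let ?N = "NN n m c"
  have h: "card {i\<in>{1..Suc ?N}. ins (del \<sigma> j) j i = X} = card {i\<in>{1..?N}. del \<sigma> j i = X} + (if X = BO then 1 else 0)" for X
    using ins_card_mid[of 1 j "Suc ?N" "del \<sigma> j" X] assms by simp
  have cnt: "card {i\<in>{1..?N}. del \<sigma> j i = X} = card {i\<in>{1..Suc ?N}. \<sigma> i = X} - (if X = BO then 1 else 0)" for X
  proof -
    have "card {i\<in>{1..Suc ?N}. \<sigma> i = X} = card {i\<in>{1..?N}. del \<sigma> j i = X} + (if X = BO then 1 else 0)"
      using h[of X] unfolding ins_del[of \<sigma> j, OF assms(4)] .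
    then show ?thesis by simp
  qed
  have ext: "del \<sigma> j i = undefined" if "i \<notin> {1..?N}" for i
  proof (cases "i < j")
    case True
    then have "i \<notin> {1..Suc ?N}" using that assms by auto
    then show ?thesis using True assms(1) unfolding PiSet_iff del_def NN_Suc by auto
  next
    case False
    then have "Suc i \<notin> {1..Suc ?N}" using that assms by auto
    then show ?thesis using False assms(1) unfolding PiSet_iff del_def NN_Suc by auto
  qed
  show ?thesis unfolding PiSet_iff cnt using assms(1) ext unfolding PiSet_iff NN_Suc
    by auto
qed

definition E1P :: "nat \<Rightarrow> nat \<Rightarrow> (nat \<Rightarrow> role) \<Rightarrow> bool" where
 "E1P N p \<pi> \<longleftrightarrow> 2 \<le> card {i\<in>{1..p}. \<pi> i = BN} \<and> 1 \<le> card {i\<in>{p+1..2*p}. \<pi> i = BO}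
    \<and> 2 \<le> card {i\<in>{N-p+1..N}. \<pi> i = SN} \<and> 1 \<le> card {i\<in>{N-2*p+1..N-p}. \<pi> i = SO}"

lemma E1_iff: "\<pi> \<in> E1 n m c \<longleftrightarrow> \<pi> \<in> PiSet n m c \<and> E1P (NN n m c) (pp n) \<pi>"
  unfolding E1_def E1P_def Let_def Int_Collect_eq by auto

lemma card_ge1_iff:
  fixes a b :: nat
  shows "1 \<le> card {i\<in>{a..b}. P i} \<longleftrightarrow> (\<exists>i\<in>{a..b}. P i)"
proof -
  have "1 \<le> card {i\<in>{a..b}. P i} \<longleftrightarrow> 0 < card {i\<in>{a..b}. P i}" by linarith
  also have "\<dots> \<longleftrightarrow> {i\<in>{a..b}. P i} \<noteq> {}" by (subst card_gt_0_iff) simp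
  finally show ?thesis by blast
qed

lemma ins_E1P:
  fixes \<pi> :: "nat \<Rightarrow> role"
  assumes E: "E1P N p \<pi>" and p: "1 \<le> p" "4*p \<le> N" and j: "1 \<le> j" "j \<le> Suc N"
   and L: "j \<le> p \<Longrightarrow> \<not>(\<pi> p = BN \<and> card {i\<in>{1..p}. \<pi> i = BN} = 2) \<and> {i\<in>{p+1..2*p}. \<pi> i = BO} \<noteq> {2*p}"
   and R1: "N-p+2 \<le> j \<Longrightarrow> \<not>(\<pi> (N-p+1) = SN \<and> card {i\<in>{N-p+1..N}. \<pi> i = SN} = 2)"
   and R2: "N-2*p+2 \<le> j \<Longrightarrow> {i\<in>{N-2*p+1..N-p}. \<pi> i = SO} \<noteq> {N-2*p+1}"
  shows "E1P (Suc N) p (ins \<pi> j)"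
proof -
  have e1: "Suc N - p + 1 = N - p + 2" "Suc N - 2*p + 1 = N - 2*p + 2" "Suc N - p = N - p + 1"
    using p by arith+
  from E have Ea: "2 \<le> card {i\<in>{1..p}. \<pi> i = BN}" and Eb: "1 \<le> card {i\<in>{p+1..2*p}. \<pi> i = BO}"
    and Ec: "2 \<le> card {i\<in>{N-p+1..N}. \<pi> i = SN}" and Ed: "1 \<le> card {i\<in>{N-2*p+1..N-p}. \<pi> i = SO}"
    unfolding E1P_def by auto
  have a: "2 \<le> card {i\<in>{1..p}. ins \<pi> j i = BN}"
  proof (cases "p < j")
    case True
    then show ?thesis using Ea ins_card_before[of p j 1 \<pi> BN] by simp
  next
    case False
    then have "card {i\<in>{1..p}. ins \<pi> j i = BN} = card {i\<in>{1..p-1}. \<pi> i = BN}"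
      using ins_card_mid[of 1 j p \<pi> BN] j by simp
    moreover have "card {i\<in>{1..p}. \<pi> i = BN} = card {i\<in>{1..p-1}. \<pi> i = BN} + (if \<pi> p = BN then 1 else 0)"
      using p by (intro split_back) auto
    ultimately show ?thesis using L False Ea by (cases "\<pi> p = BN") auto
  qed
  have b: "1 \<le> card {i\<in>{p+1..2*p}. ins \<pi> j i = BO}"
  proof (cases "2*p < j")
    case True
    then show ?thesis using Eb ins_card_before[of "2*p" j "p+1" \<pi> BO] by simp
  next
    case False
    show ?thesis
    proof (cases "p < j")
      case True
      then show ?thesis using ins_card_mid[of "p+1" j "2*p" \<pi> BO] False by simp
    next
      case False
      then have ceq: "card {i\<in>{p+1..2*p}. ins \<pi> j i = BO} = card {i\<in>{p..2*p-1}. \<pi> i = BO}"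
        using ins_card_after[of j "p+1" "2*p" \<pi> BO] j p by simp
      obtain i where i: "i \<in> {p+1..2*p}" "\<pi> i = BO" using Eb unfolding card_ge1_iff by blast
      have "\<exists>i\<in>{p+1..2*p}. \<pi> i = BO \<and> i \<noteq> 2*p"
      proof (rule ccontr)
        assume "\<not> ?thesis"
        then have "{i\<in>{p+1..2*p}. \<pi> i = BO} = {2*p}" using i by auto
        then show False using L False by auto
      qed
      then obtain i' where i': "i' \<in> {p+1..2*p}" "\<pi> i' = BO" "i' \<noteq> 2*p" by blast
      then have "i' \<in> {p..2*p-1}" by auto
      then have "\<exists>i\<in>{p..2*p-1}. \<pi> i = BO" using i' by blast
      then show ?thesis unfolding ceq card_ge1_iff .
    qed
  qed
  have c: "2 \<le> card {i\<in>{N-p+2..Suc N}. ins \<pi> j i = SN}"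
  proof (cases "j < N-p+2")
    case True
    then have "card {i\<in>{N-p+2..Suc N}. ins \<pi> j i = SN} = card {i\<in>{N-p+1..N}. \<pi> i = SN}"
      using ins_card_after[of j "N-p+2" "Suc N" \<pi> SN] j p by simp
    then show ?thesis using Ec by simp
  next
    case False
    then have "card {i\<in>{N-p+2..Suc N}. ins \<pi> j i = SN} = card {i\<in>{N-p+2..N}. \<pi> i = SN}"
      using ins_card_mid[of "N-p+2" j "Suc N" \<pi> SN] j p by simp
    moreover have "card {i\<in>{N-p+1..N}. \<pi> i = SN} = (if \<pi> (N-p+1) = SN then 1 else 0) + card {i\<in>{Suc (N-p+1)..N}. \<pi> i = SN}"
      using p by (intro split_front) auto
    moreover have "Suc (N-p+1) = N-p+2" by simp
    ultimately show ?thesis using R1 False Ec by (cases "\<pi> (N-p+1) = SN") auto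
  qed
  have d: "1 \<le> card {i\<in>{N-2*p+2..N-p+1}. ins \<pi> j i = SO}"
  proof (cases "j < N-2*p+2")
    case True
    then have "card {i\<in>{N-2*p+2..N-p+1}. ins \<pi> j i = SO} = card {i\<in>{N-2*p+1..N-p}. \<pi> i = SO}"
      using ins_card_after[of j "N-2*p+2" "N-p+1" \<pi> SO] j p by simp
    then show ?thesis using Ed by simp
  next
    case False
    obtain i where i: "i \<in> {N-2*p+1..N-p}" "\<pi> i = SO" using Ed unfolding card_ge1_iff by blast
    have "\<exists>i\<in>{N-2*p+1..N-p}. \<pi> i = SO \<and> i \<noteq> N-2*p+1"
    proof (rule ccontr)
      assume "\<not> ?thesis"
      then have "{i\<in>{N-2*p+1..N-p}. \<pi> i = SO} = {N-2*p+1}" using i by auto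
      then show False using R2 False by auto
    qed
    then obtain i0 where i0: "i0 \<in> {N-2*p+1..N-p}" "\<pi> i0 = SO" "i0 \<noteq> N-2*p+1" by blast
    then have i': "i0 \<in> {N-2*p+2..N-p}" "\<pi> i0 = SO" by auto
    have g1: "1 \<le> card {i\<in>{N-2*p+2..N-p}. \<pi> i = SO}" unfolding card_ge1_iff using i' by blast
    have g2: "1 \<le> card {i\<in>{N-2*p+2..N-p+1}. \<pi> i = SO}" unfolding card_ge1_iff using i'
      by (intro bexI[of _ i0]) auto
    show ?thesis
    proof (cases "j \<le> N-p+1")
      case True
      then have "card {i\<in>{N-2*p+2..N-p+1}. ins \<pi> j i = SO} = card {i\<in>{N-2*p+2..N-p}. \<pi> i = SO}"
        using ins_card_mid[of "N-2*p+2" j "N-p+1" \<pi> SO] False p by simp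
      then show ?thesis using g1 by simp
    next
      case False
      then have "card {i\<in>{N-2*p+2..N-p+1}. ins \<pi> j i = SO} = card {i\<in>{N-2*p+2..N-p+1}. \<pi> i = SO}"
        using ins_card_before[of "N-p+1" j "N-2*p+2" \<pi> SO] by simp
      then show ?thesis using g2 by simp
    qed
  qed
  show ?thesis unfolding E1P_def e1 using a b c d by simp
qed

lemma sw_E1P:
  assumes "a \<in> {1..p} \<longleftrightarrow> b \<in> {1..p}" "a \<in> {p+1..2*p} \<longleftrightarrow> b \<in> {p+1..2*p}"
    "a \<in> {N-p+1..N} \<longleftrightarrow> b \<in> {N-p+1..N}" "a \<in> {N-2*p+1..N-p} \<longleftrightarrow> b \<in> {N-2*p+1..N-p}"
  shows "E1P N p (sw \<pi> a b) = E1P N p \<pi>"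
  unfolding E1P_def sw_card[OF assms(1)] sw_card[OF assms(2)] sw_card[OF assms(3)] sw_card[OF assms(4)] ..

lemma sw_E1:
  assumes "\<pi> \<in> E1 n m c" "a \<in> {1..NN n m c}" "b \<in> {1..NN n m c}"
    "a \<in> {1..pp n} \<longleftrightarrow> b \<in> {1..pp n}" "a \<in> {pp n+1..2*pp n} \<longleftrightarrow> b \<in> {pp n+1..2*pp n}"
    "a \<in> {NN n m c-pp n+1..NN n m c} \<longleftrightarrow> b \<in> {NN n m c-pp n+1..NN n m c}"
    "a \<in> {NN n m c-2*pp n+1..NN n m c-pp n} \<longleftrightarrow> b \<in> {NN n m c-2*pp n+1..NN n m c-pp n}"
  shows "sw \<pi> a b \<in> E1 n m c"
  using assms sw_PiSet[of \<pi> n m c a b] sw_E1P[OF assms(4-7), of \<pi>] unfolding E1_iff by auto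

lemma sym_two:
  assumes "finite S" "finite V" "k0 \<in> V"
    and cl: "\<And>k \<pi>. k \<in> V \<Longrightarrow> \<pi> \<in> S \<Longrightarrow> sw \<pi> k k0 \<in> S"
  shows "card V * card {\<pi>\<in>S. \<pi> k0 = X \<and> card {i\<in>V. \<pi> i = X} = 2} \<le> 2 * card S"
proof -
  let ?P = "\<lambda>\<pi> k. \<pi> k = X \<and> card {i\<in>V. \<pi> i = X} = 2"
  have iff: "k \<in> V \<Longrightarrow> k0 \<in> V" for k using assms by simp
  have "card V * card {\<pi>\<in>S. ?P \<pi> k0} = (\<Sum>\<pi>\<in>S. card {k\<in>V. ?P \<pi> k})"
  proof (rule sym_avg[OF assms(1,2,3)])
    fix k \<pi> assume k: "k \<in> V" and "\<pi> \<in> S"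
    then show "sw \<pi> k k0 \<in> S" by (rule cl)
    have e: "k \<in> V \<longleftrightarrow> k0 \<in> V" using k assms by simp
    show "?P \<pi> k \<Longrightarrow> ?P (sw \<pi> k k0) k0" unfolding sw_card[OF e] by (simp add: sw_def)
    show "?P \<pi> k0 \<Longrightarrow> ?P (sw \<pi> k k0) k" unfolding sw_card[OF e] by (simp add: sw_def)
  qed
  also have "\<dots> \<le> (\<Sum>\<pi>\<in>S. 2)"
  proof (rule sum_mono)
    fix \<pi> assume "\<pi> \<in> S"
    show "card {k\<in>V. ?P \<pi> k} \<le> 2"
    proof (cases "card {i\<in>V. \<pi> i = X} = 2")
      case True
      then have "{k\<in>V. ?P \<pi> k} = {i\<in>V. \<pi> i = X}" by auto
      then show ?thesis using True by simp
    next
      case False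
      then have "{k\<in>V. ?P \<pi> k} = {}" by auto
      then have "card {k\<in>V. ?P \<pi> k} = card ({}::nat set)" by (rule arg_cong)
      then show ?thesis by simp
    qed
  qed
  finally show ?thesis by (simp add: mult.commute)
qed

lemma tr_img: "tr a b ` {b} = {a}" "tr a b ` {a} = {b}" by (auto simp: tr_def)

lemma sym_one:
  assumes "finite S" "finite V" "k0 \<in> V"
    and cl: "\<And>k \<pi>. k \<in> V \<Longrightarrow> \<pi> \<in> S \<Longrightarrow> sw \<pi> k k0 \<in> S"
  shows "card V * card {\<pi>\<in>S. {i\<in>V. \<pi> i = X} = {k0}} \<le> card S"
proof -
  let ?P = "\<lambda>\<pi> k. {i\<in>V. \<pi> i = X} = {k}"
  have "card V * card {\<pi>\<in>S. ?P \<pi> k0} = (\<Sum>\<pi>\<in>S. card {k\<in>V. ?P \<pi> k})"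
  proof (rule sym_avg[OF assms(1,2,3)])
    fix k \<pi> assume k: "k \<in> V" and "\<pi> \<in> S"
    then show "sw \<pi> k k0 \<in> S" by (rule cl)
    have e: "k \<in> V \<longleftrightarrow> k0 \<in> V" using k assms by simp
    show "?P \<pi> k \<Longrightarrow> ?P (sw \<pi> k k0) k0" unfolding sw_set[OF e] by (metis tr_img)
    show "?P \<pi> k0 \<Longrightarrow> ?P (sw \<pi> k k0) k" unfolding sw_set[OF e] by (metis tr_img)
  qed
  also have "\<dots> \<le> (\<Sum>\<pi>\<in>S. 1)"
  proof (rule sum_mono)
    fix \<pi> assume "\<pi> \<in> S"
    have "\<forall>x\<in>{k\<in>V. ?P \<pi> k}. \<forall>y\<in>{k\<in>V. ?P \<pi> k}. x = y" by auto
    then show "card {k\<in>V. ?P \<pi> k} \<le> 1" using assms(2) by (simp add: card_le_Suc0_iff_eq)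
  qed
  finally show ?thesis by simp
qed

lemma finite_E1: "finite (E1 n m c)"
  by (rule finite_subset[OF _ finite_PiSet[of n m c]]) (auto simp: E1_iff)

lemma card_diff2:
  assumes "finite X" "finite A" "finite B"
  shows "card X \<le> card (X - A - B) + card A + card B"
proof -
  have "X \<subseteq> (X - A - B) \<union> (A \<inter> X) \<union> (B \<inter> X)" by auto
  then have "card X \<le> card ((X - A - B) \<union> (A \<inter> X) \<union> (B \<inter> X))" using assms by (intro card_mono) auto
  also have "\<dots> \<le> card (X - A - B) + card (A \<inter> X) + card (B \<inter> X)"
    by (meson add_mono_thms_linordered_semiring(3) card_Un_le order.trans)
  also have "\<dots> \<le> card (X - A - B) + card A + card B"
  proof -
    have "card (A \<inter> X) \<le> card A" "card (B \<inter> X) \<le> card B"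
      using assms by (simp_all add: card_mono)
    then show ?thesis by simp
  qed
  finally show ?thesis .
qed

lemma sum_if_const: "finite S \<Longrightarrow> (\<Sum>x\<in>S. if P x then (k::nat) else 0) = k * card {x\<in>S. P x}"
  by (simp add: sum.If_cases Int_def)

lemma E1_step:
  assumes p: "1 \<le> pp n" "4 * pp n \<le> NN n m c" and c: "9 \<le> c"
  shows "card (E1 n m c) * (Suc (NN n m c) - c) \<le> card (E1 n (Suc m) c) * Suc m"
proof -
  define N where "N = NN n m c"
  define p where "p = pp n"
  have p1: "1 \<le> p" "4 * p \<le> N" using p by (simp_all add: N_def p_def)
  let ?S = "E1 n m c" and ?T = "E1 n (Suc m) c"
  define SL where "SL = {\<pi>. (\<pi> p = BN \<and> card {i\<in>{1..p}. \<pi> i = BN} = 2) \<or> {i\<in>{p+1..2*p}. \<pi> i = BO} = {2*p}}"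
  define SR where "SR = {\<pi>. (\<pi> (N-p+1) = SN \<and> card {i\<in>{N-p+1..N}. \<pi> i = SN} = 2) \<or> {i\<in>{N-2*p+1..N-p}. \<pi> i = SO} = {N-2*p+1}}"
  define G where "G \<pi> = {j\<in>{1..Suc N}. ins \<pi> j \<in> ?T}" for \<pi>
  have finS: "finite ?S" and finT: "finite ?T" by (rule finite_E1)+
  have NS: "NN n (Suc m) c = Suc N" by (simp add: N_def NN_Suc)
  have up: "(\<Sum>\<pi>\<in>?S. card (G \<pi>)) \<le> card ?T * Suc m"
  proof -
    have "(\<Sum>\<pi>\<in>?S. card (G \<pi>)) = card (Sigma ?S G)"
      using finS by (intro card_SigmaI[symmetric]) (auto simp: G_def)
    also have "\<dots> \<le> card (\<Union>\<sigma>\<in>?T. (\<lambda>j. (del \<sigma> j, j)) ` {j\<in>{1..Suc N}. \<sigma> j = BO})"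
    proof (rule card_mono)
      show "finite (\<Union>\<sigma>\<in>?T. (\<lambda>j. (del \<sigma> j, j)) ` {j\<in>{1..Suc N}. \<sigma> j = BO})"
        using finT by auto
      show "Sigma ?S G \<subseteq> (\<Union>\<sigma>\<in>?T. (\<lambda>j. (del \<sigma> j, j)) ` {j\<in>{1..Suc N}. \<sigma> j = BO})"
      proof clarify
        fix \<pi> j assume "\<pi> \<in> ?S" "j \<in> G \<pi>"
        then have h: "ins \<pi> j \<in> ?T" "j \<in> {1..Suc N}" unfolding G_def by auto
        have "(\<pi>, j) = (\<lambda>j'. (del (ins \<pi> j) j', j')) j" by (simp add: del_ins)
        moreover have "j \<in> {j'\<in>{1..Suc N}. ins \<pi> j j' = BO}" using h by (simp add: ins_at)
        ultimately show "(\<pi>, j) \<in> (\<Union>\<sigma>\<in>?T. (\<lambda>j. (del \<sigma> j, j)) ` {j\<in>{1..Suc N}. \<sigma> j = BO})"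
          using h by blast
      qed
    qed
    also have "\<dots> \<le> (\<Sum>\<sigma>\<in>?T. card ((\<lambda>j. (del \<sigma> j, j)) ` {j\<in>{1..Suc N}. \<sigma> j = BO}))"
      using finT by (rule card_UN_le)
    also have "\<dots> \<le> (\<Sum>\<sigma>\<in>?T. Suc m)"
    proof (rule sum_mono)
      fix \<sigma> assume s: "\<sigma> \<in> ?T"
      have "card ((\<lambda>j. (del \<sigma> j, j)) ` {j\<in>{1..Suc N}. \<sigma> j = BO}) \<le> card {j\<in>{1..Suc N}. \<sigma> j = BO}"
        by (rule card_image_le) simp
      also have "\<dots> = Suc m" using s unfolding E1_iff PiSet_iff NS by simp
      finally show "card ((\<lambda>j. (del \<sigma> j, j)) ` {j\<in>{1..Suc N}. \<sigma> j = BO}) \<le> Suc m" .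
    qed
    also have "\<dots> = card ?T * Suc m" by simp
    finally show ?thesis .
  qed
  have low: "Suc N \<le> card (G \<pi>) + (if \<pi> \<in> SL then p else 0) + (if \<pi> \<in> SR then 2*p else 0)"
    if \<pi>S: "\<pi> \<in> ?S" for \<pi>
  proof -
    define A where "A = (if \<pi> \<in> SL then {1..p} else {})"
    define B where "B = (if \<pi> \<in> SR then {N-2*p+2..Suc N} else {})"
    have cA: "card A = (if \<pi> \<in> SL then p else 0)" by (simp add: A_def)
    have cB: "card B = (if \<pi> \<in> SR then 2*p else 0)" using p1 by (simp add: B_def)
    have sub: "{1..Suc N} - A - B \<subseteq> G \<pi>"
    proof
      fix j assume j: "j \<in> {1..Suc N} - A - B"
      have E: "E1P N p \<pi>" and PI: "\<pi> \<in> PiSet n m c" using \<pi>S unfolding E1_iff N_def p_def by auto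
      have "E1P (Suc N) p (ins \<pi> j)"
      proof (rule ins_E1P[OF E p1])
        show "1 \<le> j" "j \<le> Suc N" using j by auto
        assume "j \<le> p"
        then have "\<pi> \<notin> SL" using j by (auto simp: A_def split: if_splits)
        then show "\<not>(\<pi> p = BN \<and> card {i\<in>{1..p}. \<pi> i = BN} = 2) \<and> {i\<in>{p+1..2*p}. \<pi> i = BO} \<noteq> {2*p}"
          unfolding SL_def by auto
      next
        assume "N-p+2 \<le> j"
        then have "\<pi> \<notin> SR" using j p1 by (auto simp: B_def split: if_splits)
        then show "\<not>(\<pi> (N-p+1) = SN \<and> card {i\<in>{N-p+1..N}. \<pi> i = SN} = 2)"
          unfolding SR_def by auto
      next
        assume "N-2*p+2 \<le> j"
        then have "\<pi> \<notin> SR" using j p1 by (auto simp: B_def split: if_splits)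
        then show "{i\<in>{N-2*p+1..N-p}. \<pi> i = SO} \<noteq> {N-2*p+1}"
          unfolding SR_def by auto
      qed
      moreover have "ins \<pi> j \<in> PiSet n (Suc m) c" using PI j by (intro ins_PiSet) (auto simp: N_def)
      ultimately show "j \<in> G \<pi>" using j unfolding G_def E1_iff NS p_def by auto
    qed
    have "Suc N \<le> card ({1..Suc N} - A - B) + card A + card B"
      using card_diff2[of "{1..Suc N}" A B] by (simp add: A_def B_def)
    also have "card ({1..Suc N} - A - B) \<le> card (G \<pi>)"
      by (rule card_mono[OF _ sub]) (simp add: G_def)
    finally show ?thesis using cA cB by simp
  qed
  have cl: "\<And>\<pi> k k0 V. \<pi> \<in> ?S \<Longrightarrow> k \<in> V \<Longrightarrow> k0 \<in> V \<Longrightarrow>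
     V = {1..p} \<or> V = {p+1..2*p} \<or> V = {N-p+1..N} \<or> V = {N-2*p+1..N-p} \<Longrightarrow> sw \<pi> k k0 \<in> ?S"
  proof -
    fix \<pi> k k0 V assume that: "\<pi> \<in> ?S" "k \<in> V" "k0 \<in> V"
      and V: "V = {1..p} \<or> V = {p+1..2*p} \<or> V = {N-p+1..N} \<or> V = {N-2*p+1..N-p}"
    from V show "sw \<pi> k k0 \<in> ?S"
    proof (elim disjE)
      assume "V = {1..p}" then show ?thesis using that(1-3) p1
        by (intro sw_E1) (auto simp: N_def[symmetric] p_def[symmetric])
    next
      assume "V = {p+1..2*p}" then show ?thesis using that(1-3) p1
        by (intro sw_E1) (auto simp: N_def[symmetric] p_def[symmetric])
    next
      assume "V = {N-p+1..N}" then show ?thesis using that(1-3) p1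
        by (intro sw_E1) (auto simp: N_def[symmetric] p_def[symmetric])
    next
      assume "V = {N-2*p+1..N-p}" then show ?thesis using that(1-3) p1
        by (intro sw_E1) (auto simp: N_def[symmetric] p_def[symmetric])
    qed
  qed
  have cl1: "\<And>k \<pi>. k \<in> {1..p} \<Longrightarrow> \<pi> \<in> ?S \<Longrightarrow> sw \<pi> k p \<in> ?S"
    using p1 by (intro cl[where V="{1..p}"]) auto
  have cl2: "\<And>k \<pi>. k \<in> {p+1..2*p} \<Longrightarrow> \<pi> \<in> ?S \<Longrightarrow> sw \<pi> k (2*p) \<in> ?S"
    using p1 by (intro cl[where V="{p+1..2*p}"]) auto
  have cl3: "\<And>k \<pi>. k \<in> {N-p+1..N} \<Longrightarrow> \<pi> \<in> ?S \<Longrightarrow> sw \<pi> k (N-p+1) \<in> ?S"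
    using p1 by (intro cl[where V="{N-p+1..N}"]) auto
  have cl4: "\<And>k \<pi>. k \<in> {N-2*p+1..N-p} \<Longrightarrow> \<pi> \<in> ?S \<Longrightarrow> sw \<pi> k (N-2*p+1) \<in> ?S"
    using p1 by (intro cl[where V="{N-2*p+1..N-p}"]) auto
  have s1: "p * card {\<pi>\<in>?S. \<pi> p = BN \<and> card {i\<in>{1..p}. \<pi> i = BN} = 2} \<le> 2 * card ?S"
    using sym_two[OF finS, of "{1..p}" p, OF _ _ cl1, of BN] p1 by simp
  have s2: "p * card {\<pi>\<in>?S. {i\<in>{p+1..2*p}. \<pi> i = BO} = {2*p}} \<le> card ?S"
    using sym_one[OF finS, of "{p+1..2*p}" "2*p", OF _ _ cl2, of BO] p1 by simp
  have s3: "p * card {\<pi>\<in>?S. \<pi> (N-p+1) = SN \<and> card {i\<in>{N-p+1..N}. \<pi> i = SN} = 2} \<le> 2 * card ?S"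
    using sym_two[OF finS, of "{N-p+1..N}" "N-p+1", OF _ _ cl3, of SN] p1 by simp
  have s4: "p * card {\<pi>\<in>?S. {i\<in>{N-2*p+1..N-p}. \<pi> i = SO} = {N-2*p+1}} \<le> card ?S"
  proof -
    have "card {N-2*p+1..N-p} = p" using p1 by simp
    then show ?thesis
      using sym_one[OF finS, of "{N-2*p+1..N-p}" "N-2*p+1", OF _ _ cl4, of SO] p1 by simp
  qed
  have sL: "p * card {\<pi>\<in>?S. \<pi> \<in> SL} \<le> 3 * card ?S"
  proof -
    let ?A = "{\<pi>\<in>?S. \<pi> p = BN \<and> card {i\<in>{1..p}. \<pi> i = BN} = 2}"
    let ?B = "{\<pi>\<in>?S. {i\<in>{p+1..2*p}. \<pi> i = BO} = {2*p}}"
    have eq: "{\<pi>\<in>?S. \<pi> \<in> SL} = ?A \<union> ?B"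
      unfolding SL_def by auto
    have "card {\<pi>\<in>?S. \<pi> \<in> SL} \<le> card ?A + card ?B" unfolding eq by (rule card_Un_le)
    then have "p * card {\<pi>\<in>?S. \<pi> \<in> SL} \<le> p * (card ?A + card ?B)" by (rule mult_le_mono2)
    then have "p * card {\<pi>\<in>?S. \<pi> \<in> SL} \<le> p * card ?A + p * card ?B" by (simp only: add_mult_distrib2)
    then show ?thesis using s1 s2 by linarith
  qed
  have sR: "p * card {\<pi>\<in>?S. \<pi> \<in> SR} \<le> 3 * card ?S"
  proof -
    let ?A = "{\<pi>\<in>?S. \<pi> (N-p+1) = SN \<and> card {i\<in>{N-p+1..N}. \<pi> i = SN} = 2}"
    let ?B = "{\<pi>\<in>?S. {i\<in>{N-2*p+1..N-p}. \<pi> i = SO} = {N-2*p+1}}"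
    have eq: "{\<pi>\<in>?S. \<pi> \<in> SR} = ?A \<union> ?B"
      unfolding SR_def by auto
    have "card {\<pi>\<in>?S. \<pi> \<in> SR} \<le> card ?A + card ?B" unfolding eq by (rule card_Un_le)
    then have "p * card {\<pi>\<in>?S. \<pi> \<in> SR} \<le> p * (card ?A + card ?B)" by (rule mult_le_mono2)
    then have "p * card {\<pi>\<in>?S. \<pi> \<in> SR} \<le> p * card ?A + p * card ?B" by (simp only: add_mult_distrib2)
    then show ?thesis using s3 s4 by linarith
  qed
  have "Suc N * card ?S = (\<Sum>\<pi>\<in>?S. Suc N)" by simp
  also have "\<dots> \<le> (\<Sum>\<pi>\<in>?S. card (G \<pi>) + (if \<pi> \<in> SL then p else 0) + (if \<pi> \<in> SR then 2*p else 0))"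
    using low by (rule sum_mono)
  also have "\<dots> = (\<Sum>\<pi>\<in>?S. card (G \<pi>)) + p * card {\<pi>\<in>?S. \<pi> \<in> SL} + 2 * (p * card {\<pi>\<in>?S. \<pi> \<in> SR})"
    using finS by (simp add: sum.distrib sum_if_const)
  finally have main: "Suc N * card ?S \<le> card ?T * Suc m + 9 * card ?S"
    using up sL sR by linarith
  have "card ?S * (Suc N - c) \<le> card ?S * (Suc N - 9)"
    using c by (intro mult_le_mono2) simp
  also have "\<dots> = Suc N * card ?S - 9 * card ?S" by (simp add: diff_mult_distrib2 mult.commute)
  also have "\<dots> \<le> card ?T * Suc m" using main by linarith
  finally show ?thesis unfolding N_def .
qed

definition Aset :: "nat \<Rightarrow> nat \<Rightarrow> nat \<Rightarrow> (nat \<Rightarrow> role) set" where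
  "Aset n m c = {\<pi> \<in> PiSet n m c. \<forall>i\<in>{1..NN n m c}. \<pi> i = SN \<longrightarrow> i \<le> 2*n+2*c}"

lemma finite_Aset: "finite (Aset n m c)"
  by (rule finite_subset[OF _ finite_PiSet[of n m c]]) (auto simp: Aset_def)

lemma A_step:
  assumes L: "1 \<le> 2*n+2*c" "2*n+2*c \<le> NN n m c"
  shows "card (Aset n (Suc m) c) * Suc m \<le> card (Aset n m c) * (Suc (NN n m c) - c)"
proof -
  define N where "N = NN n m c"
  define L where "L = 2*n+2*c"
  have L1: "1 \<le> L" "L \<le> N" using L by (simp_all add: N_def L_def)
  let ?S = "Aset n m c" and ?T = "Aset n (Suc m) c"
  have NS: "NN n (Suc m) c = Suc N" by (simp add: N_def NN_Suc)
  have Sdef: "?S = {\<pi> \<in> PiSet n m c. \<forall>i\<in>{1..N}. \<pi> i = SN \<longrightarrow> i \<le> L}"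
    by (simp add: Aset_def N_def L_def)
  have Tdef: "?T = {\<pi> \<in> PiSet n (Suc m) c. \<forall>i\<in>{1..Suc N}. \<pi> i = SN \<longrightarrow> i \<le> L}"
    by (simp add: Aset_def NS L_def)
  define G where "G \<pi> = {j\<in>{1..Suc N}. ins \<pi> j \<in> ?T}" for \<pi>
  have finS: "finite ?S" and finT: "finite ?T" by (rule finite_Aset)+
  define F where "F \<sigma> = (\<lambda>j. (del \<sigma> j, j)) ` {j\<in>{1..Suc N}. \<sigma> j = BO}" for \<sigma>
  have low: "card ?T * Suc m \<le> (\<Sum>\<pi>\<in>?S. card (G \<pi>))"
  proof -
    have "card ?T * Suc m = (\<Sum>\<sigma>\<in>?T. card (F \<sigma>))"
    proof -
      have "card (F \<sigma>) = Suc m" if "\<sigma> \<in> ?T" for \<sigma>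
      proof -
        have "card (F \<sigma>) = card {j\<in>{1..Suc N}. \<sigma> j = BO}"
          unfolding F_def by (rule card_image) (auto intro: inj_onI)
        also have "\<dots> = Suc m" using that unfolding Tdef PiSet_iff NS by simp
        finally show ?thesis .
      qed
      then show ?thesis by simp
    qed
    also have "\<dots> = card (\<Union>\<sigma>\<in>?T. F \<sigma>)"
    proof (rule card_UN_disjoint[symmetric])
      show "finite ?T" by (rule finT)
      show "\<forall>\<sigma>\<in>?T. finite (F \<sigma>)" by (simp add: F_def)
      show "\<forall>\<sigma>\<in>?T. \<forall>\<sigma>'\<in>?T. \<sigma> \<noteq> \<sigma>' \<longrightarrow> F \<sigma> \<inter> F \<sigma>' = {}"
      proof (intro ballI impI)
        fix \<sigma> \<sigma>' assume "\<sigma> \<in> ?T" "\<sigma>' \<in> ?T" "\<sigma> \<noteq> \<sigma>'"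
        show "F \<sigma> \<inter> F \<sigma>' = {}"
        proof (rule ccontr)
          assume "F \<sigma> \<inter> F \<sigma>' \<noteq> {}"
          then obtain j where "\<sigma> j = BO" "\<sigma>' j = BO" "del \<sigma> j = del \<sigma>' j"
            unfolding F_def by auto
          then have "ins (del \<sigma> j) j = ins (del \<sigma>' j) j" by simp
          then have "\<sigma> = \<sigma>'" using ins_del \<open>\<sigma> j = BO\<close> \<open>\<sigma>' j = BO\<close> by metis
          then show False using \<open>\<sigma> \<noteq> \<sigma>'\<close> by simp
        qed
      qed
    qed
    also have "\<dots> \<le> card (Sigma ?S G)"
    proof (rule card_mono)
      show "finite (Sigma ?S G)" using finS by (auto simp: G_def)
      show "(\<Union>\<sigma>\<in>?T. F \<sigma>) \<subseteq> Sigma ?S G"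
      proof
        fix x assume "x \<in> (\<Union>\<sigma>\<in>?T. F \<sigma>)"
        then obtain \<sigma> j where s: "\<sigma> \<in> ?T" and j: "j \<in> {1..Suc N}" "\<sigma> j = BO" and x: "x = (del \<sigma> j, j)"
          unfolding F_def by auto
        have sP: "\<sigma> \<in> PiSet n (Suc m) c" and sA: "\<forall>i\<in>{1..Suc N}. \<sigma> i = SN \<longrightarrow> i \<le> L"
          using s unfolding Tdef by auto
        have "del \<sigma> j \<in> PiSet n m c" using del_PiSet[OF sP] j by (auto simp: N_def)
        moreover have "\<forall>i\<in>{1..N}. del \<sigma> j i = SN \<longrightarrow> i \<le> L"
        proof (intro ballI impI)
          fix i assume i: "i \<in> {1..N}" "del \<sigma> j i = SN"
          show "i \<le> L"
          proof (cases "i < j")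
            case True then show ?thesis using i sA by (auto simp: del_def)
          next
            case False
            then have "\<sigma> (Suc i) = SN" using i by (simp add: del_def)
            then show ?thesis using i sA by fastforce
          qed
        qed
        ultimately have "del \<sigma> j \<in> ?S" unfolding Sdef by simp
        moreover have "j \<in> G (del \<sigma> j)" unfolding G_def using j s ins_del[of \<sigma> j] by simp
        ultimately show "x \<in> Sigma ?S G" using x by simp
      qed
    qed
    also have "\<dots> = (\<Sum>\<pi>\<in>?S. card (G \<pi>))"
      using finS by (intro card_SigmaI) (auto simp: G_def)
    finally show ?thesis .
  qed
  have up: "card (G \<pi>) + (if \<pi> L = SN then L else 0) \<le> Suc N" if \<pi>S: "\<pi> \<in> ?S" for \<pi>
  proof -
    have sub: "G \<pi> \<subseteq> {1..Suc N} - (if \<pi> L = SN then {1..L} else {})"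
    proof
      fix j assume j: "j \<in> G \<pi>"
      then have j1: "j \<in> {1..Suc N}" "ins \<pi> j \<in> ?T" unfolding G_def by auto
      have "\<not> (\<pi> L = SN \<and> j \<le> L)"
      proof
        assume h: "\<pi> L = SN \<and> j \<le> L"
        then have "ins \<pi> j (Suc L) = SN" by (simp add: ins_def)
        moreover have "Suc L \<in> {1..Suc N}" using L1 by simp
        ultimately show False using j1(2) unfolding Tdef by fastforce
      qed
      then show "j \<in> {1..Suc N} - (if \<pi> L = SN then {1..L} else {})" using j1 by auto
    qed
    have "card (G \<pi>) \<le> card ({1..Suc N} - (if \<pi> L = SN then {1..L} else {}))"
      by (rule card_mono[OF _ sub]) simp
    also have "\<dots> = Suc N - (if \<pi> L = SN then L else 0)"
      using L1 by (auto simp: card_Diff_subset)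
    finally show ?thesis using L1 by (cases "\<pi> L = SN") auto
  qed
  have cl: "sw \<pi> k L \<in> ?S" if "k \<in> {1..L}" "\<pi> \<in> ?S" for k \<pi>
  proof -
    have "sw \<pi> k L \<in> PiSet n m c" using that L1 unfolding Sdef by (intro sw_PiSet) (auto simp: N_def)
    moreover have "\<forall>i\<in>{1..N}. sw \<pi> k L i = SN \<longrightarrow> i \<le> L"
      using that unfolding Sdef sw_def by auto
    ultimately show ?thesis unfolding Sdef by simp
  qed
  have sym: "card {1..L} * card {\<pi>\<in>?S. \<pi> L = SN} = (\<Sum>\<pi>\<in>?S. card {k\<in>{1..L}. \<pi> k = SN})"
    by (rule sym_avg[OF finS]) (use L1 cl in \<open>auto simp: sw_def\<close>)
  have cnt: "card {k\<in>{1..L}. \<pi> k = SN} = c" if "\<pi> \<in> ?S" for \<pi>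
  proof -
    have "{k\<in>{1..L}. \<pi> k = SN} = {k\<in>{1..N}. \<pi> k = SN}" using that L1 unfolding Sdef by auto
    then show ?thesis using that unfolding Sdef PiSet_iff N_def by simp
  qed
  have symc: "L * card {\<pi>\<in>?S. \<pi> L = SN} = c * card ?S"
    using sym cnt by simp
  have "card ?T * Suc m + c * card ?S \<le> (\<Sum>\<pi>\<in>?S. card (G \<pi>)) + L * card {\<pi>\<in>?S. \<pi> L = SN}"
    using low symc by linarith
  also have "\<dots> = (\<Sum>\<pi>\<in>?S. card (G \<pi>) + (if \<pi> L = SN then L else 0))"
    using finS by (simp add: sum.distrib sum_if_const)
  also have "\<dots> \<le> (\<Sum>\<pi>\<in>?S. Suc N)" using up by (rule sum_mono)
  also have "\<dots> = Suc N * card ?S" by simp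
  finally have "card ?T * Suc m + c * card ?S \<le> Suc N * card ?S" .
  then have "card ?T * Suc m \<le> Suc N * card ?S - c * card ?S" by linarith
  also have "\<dots> = card ?S * (Suc N - c)" by (simp add: diff_mult_distrib mult.commute)
  finally show ?thesis unfolding N_def .
qed

lemma pp_bounds: "n \<le> 10 * pp n" "10 * pp n \<le> n + 9"
proof -
  define q where "q = \<lceil>real n / 10\<rceil>"
  have q: "real_of_int q - 1 < real n / 10" "real n / 10 \<le> real_of_int q"
    using ceiling_correct[of "real n / 10"] unfolding q_def by blast+
  have "real_of_int (int n) \<le> real_of_int (10 * q)" using q(2) by simp
  then have a: "int n \<le> 10 * q" by (simp only: of_int_le_iff)
  have "real_of_int (10 * q) < real_of_int (int n + 10)" using q(1) by simp
  then have b: "10 * q < int n + 10" by (simp only: of_int_less_iff)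
  have pq: "pp n = nat q" by (simp add: pp_def q_def)
  show "n \<le> 10 * pp n" using a unfolding pq by linarith
  show "10 * pp n \<le> n + 9" using a b unfolding pq by linarith
qed

lemma X_bound:
  fixes cX cS a b :: nat
  assumes "cX * a \<le> cS * b" "100 * b \<le> a" "0 < a"
  shows "100 * cX \<le> cS"
proof -
  have "(100 * cX) * a \<le> 100 * (cS * b)" using assms(1) by simp
  also have "\<dots> = cS * (100*b)" by simp
  also have "\<dots> \<le> cS * a" using assms(2) by (rule mult_le_mono2)
  finally show ?thesis using assms(3) by simp
qed

lemma X0_bound:
  assumes "R \<subseteq> {1..NN n m c}" "card R = r"
    and k: "\<And>\<pi>. \<pi> \<in> PiSet n m c \<Longrightarrow> card {i\<in>{1..NN n m c}. \<pi> i = l} = k"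
    and "100 * NN n m c \<le> r * k" "0 < r * k"
  shows "100 * card {\<pi>\<in>PiSet n m c. card {i\<in>R. \<pi> i = l} = 0} \<le> card (PiSet n m c)"
proof -
  have h: "card {\<pi>\<in>PiSet n m c. card {i\<in>R. \<pi> i = l} = 0} * ((card R - 0) * (k - 0))
       \<le> card {\<pi>\<in>PiSet n m c. card {i\<in>R. \<pi> i = l} = Suc 0} * (Suc 0 * NN n m c)"
    by (rule hyper_ratio[OF refl refl assms(1) k])
  have "card {\<pi>\<in>PiSet n m c. card {i\<in>R. \<pi> i = l} = Suc 0} \<le> card (PiSet n m c)"
    by (rule card_mono[OF finite_PiSet]) auto
  then have h2: "card {\<pi>\<in>PiSet n m c. card {i\<in>R. \<pi> i = l} = Suc 0} * NN n m c \<le> card (PiSet n m c) * NN n m c"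
    by (rule mult_le_mono1)
  have h': "card {\<pi>\<in>PiSet n m c. card {i\<in>R. \<pi> i = l} = 0} * (r * k) \<le> card {\<pi>\<in>PiSet n m c. card {i\<in>R. \<pi> i = l} = Suc 0} * NN n m c"
    using h assms(2) by simp
  have "card {\<pi>\<in>PiSet n m c. card {i\<in>R. \<pi> i = l} = 0} * (r * k) \<le> card (PiSet n m c) * NN n m c"
    using h' h2 by (rule order.trans)
  then show ?thesis using assms(4,5) by (rule X_bound)
qed

lemma X1_bound:
  assumes "R \<subseteq> {1..NN n m c}" "card R = r"
    and k: "\<And>\<pi>. \<pi> \<in> PiSet n m c \<Longrightarrow> card {i\<in>{1..NN n m c}. \<pi> i = l} = k"
    and "200 * NN n m c \<le> (r - 1) * (k - 1)" "0 < (r - 1) * (k - 1)"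
  shows "100 * card {\<pi>\<in>PiSet n m c. card {i\<in>R. \<pi> i = l} = 1} \<le> card (PiSet n m c)"
proof -
  have h: "card {\<pi>\<in>PiSet n m c. card {i\<in>R. \<pi> i = l} = 1} * ((card R - 1) * (k - 1))
       \<le> card {\<pi>\<in>PiSet n m c. card {i\<in>R. \<pi> i = l} = Suc 1} * (Suc 1 * NN n m c)"
    by (rule hyper_ratio[OF refl refl assms(1) k])
  have "card {\<pi>\<in>PiSet n m c. card {i\<in>R. \<pi> i = l} = Suc 1} \<le> card (PiSet n m c)"
    by (rule card_mono[OF finite_PiSet]) auto
  then have h2: "card {\<pi>\<in>PiSet n m c. card {i\<in>R. \<pi> i = l} = Suc 1} * (Suc 1 * NN n m c) \<le> card (PiSet n m c) * (Suc 1 * NN n m c)"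
    by (rule mult_le_mono1)
  have h': "card {\<pi>\<in>PiSet n m c. card {i\<in>R. \<pi> i = l} = 1} * ((r - 1) * (k - 1)) \<le> card {\<pi>\<in>PiSet n m c. card {i\<in>R. \<pi> i = l} = Suc 1} * (Suc 1 * NN n m c)"
    using h assms(2) by simp
  have h3: "card {\<pi>\<in>PiSet n m c. card {i\<in>R. \<pi> i = l} = 1} * ((r - 1) * (k - 1)) \<le> card (PiSet n m c) * (2 * NN n m c)"
    using order.trans[OF h' h2] by (simp add: numeral_2_eq_2)
  have a4: "100 * (2 * NN n m c) \<le> (r - 1) * (k - 1)" using assms(4) by linarith
  show ?thesis by (rule X_bound[OF h3 a4 assms(5)])
qed

lemma small_case:
  assumes c: "20000 \<le> c" "c \<le> n" and m: "n + 2*c \<le> m" "m \<le> 3*n + 2*c"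
  shows "2 * card (PiSet n m c - E1 n m c) \<le> card (PiSet n m c)"
proof -
  define N where "N = NN n m c"
  define p where "p = pp n"
  let ?S = "PiSet n m c"
  have pb: "n \<le> 10*p" "10*p \<le> n+9" using pp_bounds unfolding p_def by auto
  have Nb: "N \<le> 80*p" "2*n + 4*c \<le> N" using m c pb by (auto simp: N_def NN_def)
  have p2000: "2000 \<le> p" using pb c by linarith
  have p4: "4*p \<le> N" using pb Nb c by linarith
  have kBN: "\<And>\<pi>. \<pi> \<in> ?S \<Longrightarrow> card {i\<in>{1..NN n m c}. \<pi> i = BN} = c" by (simp add: PiSet_iff)
  have kBO: "\<And>\<pi>. \<pi> \<in> ?S \<Longrightarrow> card {i\<in>{1..NN n m c}. \<pi> i = BO} = m" by (simp add: PiSet_iff)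
  have kSO: "\<And>\<pi>. \<pi> \<in> ?S \<Longrightarrow> card {i\<in>{1..NN n m c}. \<pi> i = SO} = n" by (simp add: PiSet_iff)
  have kSN: "\<And>\<pi>. \<pi> \<in> ?S \<Longrightarrow> card {i\<in>{1..NN n m c}. \<pi> i = SN} = c" by (simp add: PiSet_iff)
  define X where "X l R j = {\<pi>\<in>?S. card {i\<in>R. \<pi> i = l} = j}" for l R j
  have sub: "?S - E1 n m c \<subseteq> X BN {1..p} 0 \<union> X BN {1..p} 1 \<union> X BO {p+1..2*p} 0 \<union>
     X SN {N-p+1..N} 0 \<union> X SN {N-p+1..N} 1 \<union> X SO {N-2*p+1..N-p} 0"
  proof
    fix \<pi> assume "\<pi> \<in> ?S - E1 n m c"
    then have pS: "\<pi> \<in> ?S" and nE: "\<not> E1P N p \<pi>" by (auto simp: E1_iff N_def p_def)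
    have "card {i\<in>{1..p}. \<pi> i = BN} = 0 \<or> card {i\<in>{1..p}. \<pi> i = BN} = 1 \<or>
      card {i\<in>{p+1..2*p}. \<pi> i = BO} = 0 \<or> card {i\<in>{N-p+1..N}. \<pi> i = SN} = 0 \<or>
      card {i\<in>{N-p+1..N}. \<pi> i = SN} = 1 \<or> card {i\<in>{N-2*p+1..N-p}. \<pi> i = SO} = 0"
      using nE unfolding E1P_def by linarith
    then show "\<pi> \<in> X BN {1..p} 0 \<union> X BN {1..p} 1 \<union> X BO {p+1..2*p} 0 \<union>
     X SN {N-p+1..N} 0 \<union> X SN {N-p+1..N} 1 \<union> X SO {N-2*p+1..N-p} 0"
      unfolding X_def Un_iff mem_Collect_eq using pS by blast
  qed
  have pc: "p * 20000 \<le> p * c" using c by simp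
  have pm: "p * 20000 \<le> p * m" using c m by simp
  have pn: "p * 20000 \<le> p * n" using c by simp
  have pc1: "(p - 1) * 19999 \<le> (p - 1) * (c - 1)" using c by (intro mult_le_mono2) linarith
  have e1: "(p - 1) * 19999 = 19999 * p - 19999" by (simp add: diff_mult_distrib)
  have r1: "{1..p} \<subseteq> {1..NN n m c}" and r2: "{p+1..2*p} \<subseteq> {1..NN n m c}"
    and r3: "{N-p+1..N} \<subseteq> {1..NN n m c}" and r4: "{N-2*p+1..N-p} \<subseteq> {1..NN n m c}"
    using p4 by (auto simp: N_def)
  have q1: "card {1..p} = p" and q2: "card {p+1..2*p} = p" and q3: "card {N-p+1..N} = p"
    and q4: "card {N-2*p+1..N-p} = p" using p4 by simp_all
  have n1: "100 * NN n m c \<le> p * c" using pc Nb unfolding N_def by linarith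
  have n2: "200 * NN n m c \<le> (p-1) * (c-1)" using pc1 e1 Nb p2000 unfolding N_def by linarith
  have n3: "100 * NN n m c \<le> p * m" using pm Nb unfolding N_def by linarith
  have n4: "100 * NN n m c \<le> p * n" using pn Nb unfolding N_def by linarith
  have o1: "0 < p * c" "0 < p * m" "0 < p * n" "0 < (p-1) * (c-1)" using p2000 c m by simp_all
  have b1: "100 * card (X BN {1..p} 0) \<le> card ?S" unfolding X_def
    by (rule X0_bound[OF r1 q1 kBN n1 o1(1)])
  have b2: "100 * card (X BN {1..p} 1) \<le> card ?S" unfolding X_def
    by (rule X1_bound[OF r1 q1 kBN n2 o1(4)])
  have b3: "100 * card (X BO {p+1..2*p} 0) \<le> card ?S" unfolding X_def
    by (rule X0_bound[OF r2 q2 kBO n3 o1(2)])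
  have b4: "100 * card (X SN {N-p+1..N} 0) \<le> card ?S" unfolding X_def
    by (rule X0_bound[OF r3 q3 kSN n1 o1(1)])
  have b5: "100 * card (X SN {N-p+1..N} 1) \<le> card ?S" unfolding X_def
    by (rule X1_bound[OF r3 q3 kSN n2 o1(4)])
  have b6: "100 * card (X SO {N-2*p+1..N-p} 0) \<le> card ?S" unfolding X_def
    by (rule X0_bound[OF r4 q4 kSO n4 o1(3)])
  let ?A1 = "X BN {1..p} 0" and ?A2 = "X BN {1..p} 1" and ?A3 = "X BO {p+1..2*p} 0"
    and ?A4 = "X SN {N-p+1..N} 0" and ?A5 = "X SN {N-p+1..N} 1" and ?A6 = "X SO {N-2*p+1..N-p} 0"
  have fin: "finite (?A1 \<union> ?A2 \<union> ?A3 \<union> ?A4 \<union> ?A5 \<union> ?A6)"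
    using finite_PiSet[of n m c] by (simp add: X_def)
  have "card (?S - E1 n m c) \<le> card (?A1 \<union> ?A2 \<union> ?A3 \<union> ?A4 \<union> ?A5 \<union> ?A6)"
    by (rule card_mono[OF fin sub])
  also have "\<dots> \<le> card ?A1 + card ?A2 + card ?A3 + card ?A4 + card ?A5 + card ?A6"
    using card_Un_le[of ?A1 ?A2] card_Un_le[of "?A1 \<union> ?A2" ?A3] card_Un_le[of "?A1 \<union> ?A2 \<union> ?A3" ?A4]
      card_Un_le[of "?A1 \<union> ?A2 \<union> ?A3 \<union> ?A4" ?A5] card_Un_le[of "?A1 \<union> ?A2 \<union> ?A3 \<union> ?A4 \<union> ?A5" ?A6]
    by linarith
  finally show ?thesis using b1 b2 b3 b4 b5 b6 by linarith
qed

lemma A_base: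
  assumes "4 \<le> c" "1 \<le> n"
  shows "2 * card (Aset n (3*n+2*c) c) \<le> card (PiSet n (3*n+2*c) c)"
proof -
  define m where "m = 3*n+2*c"
  define L where "L = 2*n+2*c"
  let ?S = "PiSet n m c"
  have N: "NN n m c = 2 * L" by (simp add: NN_def m_def L_def)
  define R where "R = {L+1..2*L}"
  have R: "R \<subseteq> {1..NN n m c}" "card R = L" by (auto simp: R_def N)
  have k: "\<And>\<pi>. \<pi> \<in> ?S \<Longrightarrow> card {i\<in>{1..NN n m c}. \<pi> i = SN} = c" by (simp add: PiSet_iff)
  let ?X0 = "{\<pi>\<in>?S. card {i\<in>R. \<pi> i = SN} = 0}" and ?X1 = "{\<pi>\<in>?S. card {i\<in>R. \<pi> i = SN} = Suc 0}"
  have h: "card ?X0 * ((card R - 0) * (c - 0)) \<le> card ?X1 * (Suc 0 * NN n m c)"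
    by (rule hyper_ratio[OF refl refl R(1) k])
  have "card ?X1 \<le> card ?S" by (rule card_mono[OF finite_PiSet]) auto
  then have a1: "card ?X1 * (2 * L) \<le> card ?S * (2 * L)" by (rule mult_le_mono1)
  have a2: "card ?X0 * (L * c) \<le> card ?X1 * (2 * L)" using h R N by simp
  have a3: "(card ?X0 * c) * L = card ?X0 * (L * c)" by (simp add: ac_simps)
  have a4: "(2 * card ?S) * L = card ?S * (2 * L)" by (simp add: ac_simps)
  have "(card ?X0 * c) * L \<le> (2 * card ?S) * L" unfolding a3 a4 using a2 a1 by (rule order.trans)
  moreover have "0 < L" using assms by (simp add: L_def)
  ultimately have "card ?X0 * c \<le> 2 * card ?S" by (subst (asm) mult_le_cancel2) simp
  moreover have "card ?X0 * 4 \<le> card ?X0 * c" using assms by simp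
  ultimately have X0: "2 * card ?X0 \<le> card ?S" by linarith
  have "Aset n m c \<subseteq> ?X0"
  proof
    fix \<pi> assume a: "\<pi> \<in> Aset n m c"
    have "\<forall>i\<in>{1..NN n m c}. \<pi> i = SN \<longrightarrow> i \<le> 2*n+2*c" using a unfolding Aset_def by blast
    then have aS: "\<forall>i\<in>{1..2*L}. \<pi> i = SN \<longrightarrow> i \<le> L" unfolding N L_def .
    have "\<pi> i \<noteq> SN" if "i \<in> R" for i
    proof -
      have "i \<in> {1..2*L}" "\<not> i \<le> L" using that by (auto simp: R_def)
      then show ?thesis using aS by blast
    qed
    then have "{i\<in>R. \<pi> i = SN} = {}" by blast
    then have "card {i\<in>R. \<pi> i = SN} = 0" by (metis card.empty)
    moreover have "\<pi> \<in> ?S" using a unfolding Aset_def by blast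
    ultimately show "\<pi> \<in> ?X0" by blast
  qed
  moreover have "finite ?X0" using finite_PiSet[of n m c] by simp
  ultimately have "card (Aset n m c) \<le> card ?X0" by (intro card_mono)
  then show ?thesis using X0 unfolding m_def by linarith
qed

lemma large_case:
  assumes c: "20000 \<le> c" "c \<le> n"
  shows "card (Aset n (3*n+2*c+d) c) \<le> card (E1 n (3*n+2*c+d) c)"
proof (induct d)
  case 0
  have s: "2 * card (PiSet n (3*n+2*c) c - E1 n (3*n+2*c) c) \<le> card (PiSet n (3*n+2*c) c)"
    using small_case[of c n "3*n+2*c"] c by simp
  have a: "2 * card (Aset n (3*n+2*c) c) \<le> card (PiSet n (3*n+2*c) c)"
    using A_base[of c n] c by simp
  have "E1 n (3*n+2*c) c \<subseteq> PiSet n (3*n+2*c) c" by (auto simp: E1_iff)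
  then have "card (PiSet n (3*n+2*c) c) = card (E1 n (3*n+2*c) c) + card (PiSet n (3*n+2*c) c - E1 n (3*n+2*c) c)"
    using finite_PiSet by (metis card_Diff_subset finite_E1 card_mono le_add_diff_inverse)
  then show ?case using s a by simp
next
  case (Suc d)
  define m where "m = 3*n+2*c+d"
  have ms: "3*n+2*c+Suc d = Suc m" by (simp add: m_def)
  have IH: "card (Aset n m c) \<le> card (E1 n m c)" using Suc unfolding m_def .
  have pb: "n \<le> 10 * pp n" "10 * pp n \<le> n + 9" by (rule pp_bounds)+
  have N1: "3*n+2*c \<le> m" by (simp add: m_def)
  have "card (Aset n (Suc m) c) * Suc m \<le> card (Aset n m c) * (Suc (NN n m c) - c)"
    using c N1 by (intro A_step) (auto simp: NN_def)
  also have "\<dots> \<le> card (E1 n m c) * (Suc (NN n m c) - c)"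
    using IH by (rule mult_le_mono1)
  also have "\<dots> \<le> card (E1 n (Suc m) c) * Suc m"
    using c pb N1 by (intro E1_step) (auto simp: NN_def)
  finally have "card (Aset n (Suc m) c) * Suc m \<le> card (E1 n (Suc m) c) * Suc m" .
  then have "card (Aset n (Suc m) c) \<le> card (E1 n (Suc m) c)" by (subst (asm) mult_le_cancel2) simp
  then show ?case unfolding ms .
qed

theorem lemma3p4:
  fixes n m c :: nat
  assumes "c \<ge> 20000" and "n \<ge> c" and "m \<ge> n + 2 * c"
  shows "measure_pmf.prob (pmf_of_set (PiSet n m c)) (E1 n m c)
         \<ge> measure_pmf.prob (pmf_of_set (PiSet n m c)) (E2 n m c)"
proof -
  let ?S = "PiSet n m c"
  have sub1: "E1 n m c \<subseteq> ?S" by (auto simp: E1_iff)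
  have sub2: "E2 n m c \<subseteq> ?S - E1 n m c" by (auto simp: E2_def)
  have E2A: "E2 n m c \<subseteq> Aset n m c"
    unfolding E2_def Aset_def by fastforce
  have finS: "finite ?S" by (rule finite_PiSet)
  have key: "card (E2 n m c) \<le> card (E1 n m c)"
  proof (cases "m \<le> 3*n+2*c")
    case True
    have s: "2 * card (?S - E1 n m c) \<le> card ?S" using small_case assms True by simp
    have "card ?S = card (E1 n m c) + card (?S - E1 n m c)"
      using sub1 finS by (metis card_Diff_subset finite_E1 card_mono le_add_diff_inverse)
    moreover have "card (E2 n m c) \<le> card (?S - E1 n m c)" using sub2 finS by (intro card_mono) auto
    ultimately show ?thesis using s by linarith
  next
    case False
    then obtain d where d: "m = 3*n+2*c+d" by (metis le_add1 le_iff_add nat_le_linear)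
    have "card (Aset n m c) \<le> card (E1 n m c)" using large_case[of c n d] assms d by simp
    moreover have "card (E2 n m c) \<le> card (Aset n m c)" using E2A finite_Aset by (rule card_mono[rotated])
    ultimately show ?thesis by linarith
  qed
  show ?thesis
  proof (cases "?S = {}")
    case True
    then have "E1 n m c = {}" "E2 n m c = {}" using sub1 sub2 by auto
    then show ?thesis by simp
  next
    case False
    have "?S \<inter> E1 n m c = E1 n m c" "?S \<inter> E2 n m c = E2 n m c" using sub1 sub2 by auto
    then show ?thesis using key
      by (simp add: measure_pmf_of_set[OF False finS] divide_right_mono)
  qed
qed

end
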